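(* Let $\mathcal{A}$ be a Boolean algebra, let $(Z_n)_{n\in\omega}$ be a proper $\mathcal{R}$-filtration of $\mathcal{A}$, and let $f:\mathcal{A}\to\omega$ be given by $f(x) = \min\{n : x \in Z_n\}$. Then there exists a sequence $(a_n)_{n\in\omega}$ in $\mathcal{A}$ such that $a_n \wedge a_m = 0$ whenever $m \neq n$ and $f(a_0) < f(a_1) < f(a_2) < \cdots$.
   Context: For a subset $Z$ of a Boolean algebra, $\mathcal{R}(Z) = Z \cup \{0,1\} \cup \{x^c : x \in Z\} \cup \{x\vee y : x,y\in Z\} \cup \{x\wedge y : x,y \in Z\} \cup \{x \wedge y^c : x,y\in Z\}$. A proper $\mathcal{R}$-filtration of a Boolean algebra $\mathcal{A}$ is a sequence $(Z_n)_{n\in\omega}$ of subsets with $Z_n \subsetneq Z_{n+1}$, $\mathcal{R}(Z_n)\subseteq Z_{n+1}$, and $\bigcup_n Z_n = \mathcal{A}$. *)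

theory Defs
  imports Main
begin

definition R_op :: "'a::boolean_algebra set \<Rightarrow> 'a set" where
  "R_op Z = Z \<union> {bot, top} \<union> {- x | x. x \<in> Z}
     \<union> {sup x y | x y. x \<in> Z \<and> y \<in> Z}
     \<union> {inf x y | x y. x \<in> Z \<and> y \<in> Z}
     \<union> {inf x (- y) | x y. x \<in> Z \<and> y \<in> Z}"

text \<open>A proper R-filtration of the whole Boolean algebra (the type 'a).\<close>
definition proper_R_filtration :: "(nat \<Rightarrow> 'a::boolean_algebra set) \<Rightarrow> bool" where
  "proper_R_filtration Z \<longleftrightarrow>
     (\<forall>n. Z n \<subset> Z (Suc n)) \<and> (\<forall>n. R_op (Z n) \<subseteq> Z (Suc n)) \<and> (\<Union>n. Z n) = UNIV"

end

theory Submission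
  imports Defs
begin

definition Ub :: "('a::boolean_algebra \<Rightarrow> nat) \<Rightarrow> 'a \<Rightarrow> bool" where
  "Ub f b \<longleftrightarrow> (\<forall>K. \<exists>y. y \<le> b \<and> K < f y)"

lemma filt_facts:
  fixes Z :: "nat \<Rightarrow> 'a::boolean_algebra set" and f :: "'a \<Rightarrow> nat"
  assumes P: "proper_R_filtration Z"
    and fdef: "\<And>x. f x = (LEAST n. x \<in> Z n)"
  shows "\<And>m n. m \<le> n \<Longrightarrow> Z m \<subseteq> Z n"
    and "\<And>x. x \<in> Z (f x)"
    and "\<And>x n. x \<in> Z n \<Longrightarrow> f x \<le> n"
proof -
  have sub: "\<And>n. Z n \<subseteq> Z (Suc n)" using P unfolding proper_R_filtration_def by auto
  show mono: "\<And>m n. m \<le> n \<Longrightarrow> Z m \<subseteq> Z n"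
    by (rule lift_Suc_mono_le[of Z], rule sub)
  show "\<And>x. x \<in> Z (f x)"
  proof -
    fix x
    have "\<exists>n. x \<in> Z n" using P unfolding proper_R_filtration_def by blast
    thus "x \<in> Z (f x)" unfolding fdef by (rule LeastI_ex)
  qed
  show "\<And>x n. x \<in> Z n \<Longrightarrow> f x \<le> n" unfolding fdef by (rule Least_le)
qed

lemma f_ops:
  fixes Z :: "nat \<Rightarrow> 'a::boolean_algebra set" and f :: "'a \<Rightarrow> nat"
  assumes P: "proper_R_filtration Z"
    and fdef: "\<And>x. f x = (LEAST n. x \<in> Z n)"
  shows "f (inf x (- y)) \<le> max (f x) (f y) + 1"
    and "f (sup x y) \<le> max (f x) (f y) + 1"
proof -
  note F = filt_facts[OF P fdef]
  define m where "m = max (f x) (f y)"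
  have x: "x \<in> Z m" using F(1)[of "f x" m] F(2)[of x] unfolding m_def by auto
  have y: "y \<in> Z m" using F(1)[of "f y" m] F(2)[of y] unfolding m_def by auto
  have R: "R_op (Z m) \<subseteq> Z (Suc m)"
    using P unfolding proper_R_filtration_def by blast
  have "inf x (- y) \<in> R_op (Z m)" using x y unfolding R_op_def by blast
  hence "inf x (- y) \<in> Z (Suc m)" using R by blast
  hence "f (inf x (- y)) \<le> Suc m" by (rule F(3))
  thus "f (inf x (- y)) \<le> max (f x) (f y) + 1" unfolding m_def by simp
  have "sup x y \<in> R_op (Z m)" using x y unfolding R_op_def by blast
  hence "sup x y \<in> Z (Suc m)" using R by blast
  hence "f (sup x y) \<le> Suc m" by (rule F(3))
  thus "f (sup x y) \<le> max (f x) (f y) + 1" unfolding m_def by simp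
qed

lemma Ub_top:
  fixes Z :: "nat \<Rightarrow> 'a::boolean_algebra set" and f :: "'a \<Rightarrow> nat"
  assumes P: "proper_R_filtration Z"
    and fdef: "\<And>x. f x = (LEAST n. x \<in> Z n)"
  shows "Ub f top"
  unfolding Ub_def
proof
  fix K
  note F = filt_facts[OF P fdef]
  have "Z K \<subset> Z (Suc K)" using P unfolding proper_R_filtration_def by blast
  then obtain x where x: "x \<in> Z (Suc K)" "x \<notin> Z K" by blast
  have "K < f x"
  proof (rule ccontr)
    assume "\<not> K < f x"
    hence "Z (f x) \<subseteq> Z K" using F(1) by simp
    thus False using F(2)[of x] x by blast
  qed
  thus "\<exists>y. y \<le> top \<and> K < f y" by auto
qed

lemma step:
  fixes Z :: "nat \<Rightarrow> 'a::boolean_algebra set" and f :: "'a \<Rightarrow> nat"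
  assumes P: "proper_R_filtration Z"
    and fdef: "\<And>x. f x = (LEAST n. x \<in> Z n)"
    and U: "Ub f b"
  shows "\<exists>a c. a \<le> b \<and> c \<le> b \<and> inf a c = bot \<and> K < f a \<and> Ub f c"
proof -
  note O = f_ops[OF P fdef]
  obtain x where x: "x \<le> b" "max K (f b) + 1 < f x" using U unfolding Ub_def by blast
  define c where "c = inf b (- x)"
  have "inf b (- c) = x" unfolding c_def using x(1)
    by (simp add: inf_sup_distrib1 inf.absorb2)
  hence "f x \<le> max (f b) (f c) + 1" using O(1)[of b c] by simp
  hence fc: "K < f c" using x(2) by linarith
  have cb: "c \<le> b" unfolding c_def by simp
  have dis: "inf x c = bot" unfolding c_def by (simp add: inf_commute inf_left_commute)
  have "Ub f x \<or> Ub f c"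
  proof (rule ccontr)
    assume "\<not> (Ub f x \<or> Ub f c)"
    then obtain L1 L2 where L1: "\<And>y. y \<le> x \<Longrightarrow> f y \<le> L1" and L2: "\<And>y. y \<le> c \<Longrightarrow> f y \<le> L2"
      unfolding Ub_def by (auto simp: not_less)
    obtain y where y: "y \<le> b" "max L1 L2 + 1 < f y" using U unfolding Ub_def by blast
    have e: "y = sup (inf y x) (inf y (- x))" by (simp add: inf_sup_distrib1[symmetric])
    have "inf y (- x) \<le> c" unfolding c_def using y(1) by (simp add: le_infI1)
    hence "f (inf y (- x)) \<le> L2" by (rule L2)
    moreover have "f (inf y x) \<le> L1" by (rule L1) simp
    moreover have "f y \<le> max (f (inf y x)) (f (inf y (- x))) + 1" using O(2)[of "inf y x" "inf y (- x)"] by (simp only: e[symmetric])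
    ultimately show False using y(2) by linarith
  qed
  thus ?thesis
  proof
    assume "Ub f x" thus ?thesis using cb x fc dis by (intro exI[of _ c] exI[of _ x]) (auto simp: inf_commute)
  next
    assume "Ub f c" thus ?thesis using cb x dis by (intro exI[of _ x] exI[of _ c]) auto
  qed
qed

theorem lemma3p7:
  fixes Z :: "nat \<Rightarrow> 'a::boolean_algebra set"
    and f :: "'a \<Rightarrow> nat"
  assumes "proper_R_filtration Z"
    and "\<And>x. f x = (LEAST n. x \<in> Z n)"
  shows "\<exists>a :: nat \<Rightarrow> 'a. (\<forall>m n. m \<noteq> n \<longrightarrow> inf (a n) (a m) = bot)
           \<and> (\<forall>n. f (a n) < f (a (Suc n)))"
proof -
  define g where "g K b = (SOME p. fst p \<le> b \<and> snd p \<le> b \<and> inf (fst p) (snd p) = bot \<and> K < f (fst p) \<and> Ub f (snd p))" for K b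
  have g: "fst (g K b) \<le> b \<and> snd (g K b) \<le> b \<and>
      inf (fst (g K b)) (snd (g K b)) = bot \<and> K < f (fst (g K b)) \<and> Ub f (snd (g K b))" if U0: "Ub f b" for K b
  proof -
    obtain a c where "a \<le> b \<and> c \<le> b \<and> inf a c = bot \<and> K < f a \<and> Ub f c"
      using step[OF assms U0] by blast
    hence "\<exists>p. fst p \<le> b \<and> snd p \<le> b \<and> inf (fst p) (snd p) = bot \<and> K < f (fst p) \<and> Ub f (snd p)"
      by (intro exI[of _ "(a, c)"]) simp
    thus ?thesis unfolding g_def by (rule someI_ex)
  qed
  define s where "s = rec_nat (g 0 top) (\<lambda>n p. g (f (fst p)) (snd p))"
  have s0: "s 0 = g 0 top" and sS: "\<And>n. s (Suc n) = g (f (fst (s n))) (snd (s n))"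
    unfolding s_def by simp_all
  have U: "Ub f (snd (s n))" for n
    by (induction n) (use g Ub_top[OF assms] s0 sS in auto)
  have props: "fst (s (Suc n)) \<le> snd (s n) \<and> snd (s (Suc n)) \<le> snd (s n) \<and>
      inf (fst (s n)) (snd (s n)) = bot \<and> f (fst (s n)) < f (fst (s (Suc n)))" for n
  proof -
    have "n = 0 \<or> (\<exists>k. n = Suc k)" by presburger
    hence "inf (fst (s n)) (snd (s n)) = bot"
      using g[of top 0] Ub_top[OF assms] g U s0 sS by auto
    thus ?thesis using g[OF U[of n]] sS[of n] by simp
  qed
  have anti: "m \<le> n \<Longrightarrow> snd (s n) \<le> snd (s m)" for m n
    by (induction n rule: dec_induct) (use props order_trans in blast)+
  have dis: "m < n \<Longrightarrow> inf (fst (s m)) (fst (s n)) = bot" for m n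
  proof -
    assume "m < n"
    then obtain k where k: "n = Suc k" "m \<le> k" by (cases n) auto
    have "fst (s n) \<le> snd (s m)" using props[of k] anti[OF k(2)] k(1) by auto
    hence "inf (fst (s m)) (fst (s n)) \<le> inf (fst (s m)) (snd (s m))" by (simp add: le_infI2)
    thus ?thesis using props[of m] by (simp add: bot_unique)
  qed
  show ?thesis
  proof (intro exI[of _ "\<lambda>n. fst (s n)"] conjI allI impI)
    fix m n :: nat assume "m \<noteq> n"
    thus "inf (fst (s n)) (fst (s m)) = bot"
    proof (cases "m < n")
      case True thus ?thesis using dis[of m n] by (simp add: inf_commute)
    next
      case False hence "n < m" using \<open>m \<noteq> n\<close> by simp
      thus ?thesis using dis[of n m] by simp
    qed
  next
    fix n show "f (fst (s n)) < f (fst (s (Suc n)))" using props by blast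
  qed
qed

end
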